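(* For $m,n\in\mathbb Z$ and $r\ge0$ define $$b_{m,n}(r):=(\pi q^{-2})^{(n-r)\# r}\sum_{s=0}^{r-1}(\pi q^2)^{n-r+m(r-s-1)}q^{(m-n+r-1)(n-r+s+1)+(n-r)s}\begin{bmatrix} m+s\\ n-r+s+1\end{bmatrix}_{q,\pi}\begin{bmatrix} n-r+s\\ s\end{bmatrix}_{q,\pi},$$ $$c_{m,n}(r):=(\pi q^{-2})^{(n-r)\# r}q^{(m-n+r)n+(n-r)r}\begin{bmatrix} m+r\\ n\end{bmatrix}_{q,\pi}\begin{bmatrix} n\\ r\end{bmatrix}_{q,\pi}.$$ Then $c_{m,n}(r)=b_{m,n}(r)+b_{m,n}(r+1)$ for all $m,n\in\mathbb Z$ and $r\ge0$. In particular (taking $m=n-r$), for $0\le r\le n$, $$q^{(n-r)r}\begin{bmatrix} n\\ r\end{bmatrix}_{q,\pi}=\sum_{s=0}^r(\pi q^2)^{(n-r)(r-s)}q^{(n-r-1)s}\begin{bmatrix} n-r+s-1\\ s\end{bmatrix}_{q,\pi}.$$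
   Context: Work in $\mathbb Q(q)^\pi:=\mathbb Q(q)[\pi]/(\pi^2-1)$. For $n\in\mathbb Z$, $[n]_{q,\pi}:=\frac{(\pi q)^n-q^{-n}}{\pi q-q^{-1}}$, $[r]^!_{q,\pi}:=[r]_{q,\pi}\cdots[1]_{q,\pi}$, and for $n\in\mathbb Z$, $r\ge0$, $\begin{bmatrix} n\\ r\end{bmatrix}_{q,\pi}:=\frac{[n]_{q,\pi}\cdots[n-r+1]_{q,\pi}}{[r]^!_{q,\pi}}$, with $\begin{bmatrix} n\\ r\end{bmatrix}_{q,\pi}:=0$ if $r<0$. For $n\in\mathbb Z$, $r\ge 0$, $n\# r:=n+(n+1)+\cdots+(n+r-1)=nr+\binom r2$. *)

theory Defs
  imports "HOL-Computational_Algebra.Polynomial" "HOL-Computational_Algebra.Fraction_Field"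
begin

type_synonym Qq = "rat poly fract"

definition qvar :: Qq where "qvar = Fract [:0, 1:] 1"

text \<open>The ring Q(q)^pi = Q(q)[pi]/(pi^2 - 1): an element QP a b stands for a + b pi
  (the standard basis 1, pi of the quotient).\<close>
datatype qpi = QP (re: Qq) (im: Qq)

instantiation qpi :: comm_ring_1
begin
definition "0 = QP 0 0"
definition "1 = QP 1 0"
definition "x + y = QP (re x + re y) (im x + im y)"
definition "x - y = QP (re x - re y) (im x - im y)"
definition "- x = QP (- re x) (- im x)"
definition "x * y = QP (re x * re y + im x * im y) (re x * im y + im x * re y)"
instance
  by standard (auto simp: zero_qpi_def one_qpi_def plus_qpi_def minus_qpi_def
      uminus_qpi_def times_qpi_def algebra_simps intro: qpi.expand)
end

text \<open>Inverse: for a unit a + b pi (i.e. a^2 - b^2 \<noteq> 0) this is the ring inverse;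
  division is multiplication by the inverse.  Integer powers (powi) use this inverse.\<close>
instantiation qpi :: inverse
begin
definition "inverse x = QP (re x / (re x ^ 2 - im x ^ 2)) (- im x / (re x ^ 2 - im x ^ 2))"
definition "divide x y = x * inverse (y :: qpi)"
instance ..
end

definition qpi_of :: "Qq \<Rightarrow> qpi" where "qpi_of a = QP a 0"

definition PI :: qpi where "PI = QP 0 1"

definition Q :: qpi where "Q = qpi_of qvar"

definition qint :: "int \<Rightarrow> qpi" where
  "qint n = ((PI * Q) powi n - Q powi (- n)) / (PI * Q - Q powi (-1))"

definition qfact :: "nat \<Rightarrow> qpi" where
  "qfact r = (\<Prod>i\<in>{1..r}. qint (int i))"

definition qbinom :: "int \<Rightarrow> int \<Rightarrow> qpi" where
  "qbinom n r = (if r < 0 then 0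
     else (\<Prod>i<nat r. qint (n - int i)) / qfact (nat r))"

text \<open>n # r = n + (n+1) + ... + (n+r-1) = n r + binom(r,2).\<close>
definition hsh :: "int \<Rightarrow> nat \<Rightarrow> int" where
  "hsh n r = n * int r + int (r choose 2)"

definition bmn :: "int \<Rightarrow> int \<Rightarrow> nat \<Rightarrow> qpi" where
  "bmn m n r = (PI * Q powi (-2)) powi (hsh (n - int r) r) *
     (\<Sum>s<r. (PI * Q powi 2) powi (n - int r + m * (int r - int s - 1))
        * Q powi ((m - n + int r - 1) * (n - int r + int s + 1) + (n - int r) * int s)
        * qbinom (m + int s) (n - int r + int s + 1)
        * qbinom (n - int r + int s) (int s))"

definition cmn :: "int \<Rightarrow> int \<Rightarrow> nat \<Rightarrow> qpi" where
  "cmn m n r = (PI * Q powi (-2)) powi (hsh (n - int r) r) *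
     Q powi ((m - n + int r) * n + (n - int r) * int r)
     * qbinom (m + int r) n * qbinom n (int r)"

end

theory Submission imports Defs begin

definition gint :: "'a::field \<Rightarrow> 'a \<Rightarrow> int \<Rightarrow> 'a" where
  "gint q e n = ((e*q) powi n - q powi (-n)) / (e*q - q powi (-1))"
definition gfact :: "'a::field \<Rightarrow> 'a \<Rightarrow> nat \<Rightarrow> 'a" where
  "gfact q e r = (\<Prod>i\<in>{1..r}. gint q e (int i))"
definition gbinom :: "'a::field \<Rightarrow> 'a \<Rightarrow> int \<Rightarrow> int \<Rightarrow> 'a" where
  "gbinom q e n r = (if r < 0 then 0 else (\<Prod>i<nat r. gint q e (n - int i)) / gfact q e (nat r))"

lemma gfact_Suc: "gfact q e (Suc j) = gfact q e j * gint q e (int (Suc j))"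
  by (simp add: gfact_def)

definition gb :: "'a::field \<Rightarrow> 'a \<Rightarrow> int \<Rightarrow> int \<Rightarrow> nat \<Rightarrow> 'a" where
  "gb q e m n r = (e * q powi (-2)) powi (hsh (n - int r) r) *
     (\<Sum>s<r. (e * q powi 2) powi (n - int r + m * (int r - int s - 1))
        * q powi ((m - n + int r - 1) * (n - int r + int s + 1) + (n - int r) * int s)
        * gbinom q e (m + int s) (n - int r + int s + 1)
        * gbinom q e (n - int r + int s) (int s))"

definition gc :: "'a::field \<Rightarrow> 'a \<Rightarrow> int \<Rightarrow> int \<Rightarrow> nat \<Rightarrow> 'a" where
  "gc q e m n r = (e * q powi (-2)) powi (hsh (n - int r) r) *
     q powi ((m - n + int r) * n + (n - int r) * int r)
     * gbinom q e (m + int r) n * gbinom q e n (int r)"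

lemma hsh_Suc: "hsh (n - int (Suc r)) (Suc r) = hsh (n - int r) r + (n - int r) - 1"
proof -
  have "Suc r choose 2 = (r choose 2) + r" by (simp add: numeral_2_eq_2)
  thus ?thesis by (simp add: hsh_def algebra_simps)
qed

locale gsetup =
  fixes q e :: "'a::field"
  assumes e2: "e * e = 1" and q0: "q \<noteq> 0"
    and nd: "\<And>i::nat. i > 0 \<Longrightarrow> (e*q)^i * q^i \<noteq> 1"
begin

lemma e0: "e \<noteq> 0" using e2 by auto

lemma D0: "e*q - q powi (-1) \<noteq> 0"
proof
  assume "e*q - q powi (-1) = 0"
  hence "e*q = inverse q" by simp
  hence "(e*q)^1 * q^1 = 1" using q0 by simp
  thus False using nd[of 1] by simp
qed

lemma gint_nz: "i > 0 \<Longrightarrow> gint q e (int i) \<noteq> 0"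
proof
  assume i: "i > 0" and h: "gint q e (int i) = 0"
  hence "(e*q) ^ i = q powi (- int i)" using D0 by (simp add: gint_def)
  hence "(e*q) ^ i = inverse (q ^ i)" by (simp add: power_int_minus)
  hence "(e*q)^i * q^i = 1" using q0 by (simp add: field_simps)
  thus False using nd[OF i] by simp
qed

lemma gfact_nz: "gfact q e j \<noteq> 0"
  by (induct j) (simp_all add: gfact_def gint_nz del: of_nat_Suc)

lemma gint_0: "gint q e 0 = 0" by (simp add: gint_def)

lemma gint_add: "gint q e (a + b) = (e*q) powi a * gint q e b + q powi (-b) * gint q e a"
proof -
  have eq0: "e*q \<noteq> 0" using e0 q0 by simp
  have h1: "(e*q) powi (a+b) = (e*q) powi a * (e*q) powi b" using eq0 by (simp add: power_int_add)
  have h2: "q powi (-(a+b)) = q powi (-b) * q powi (-a)"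
    using q0 power_int_add[of q "-b" "-a"] by (simp add: algebra_simps)
  have gen: "\<And>X Y U V D::'a. D \<noteq> 0 \<Longrightarrow> (X*Y - V*U)/D = X*((Y - V)/D) + V*((X-U)/D)"
    by (simp add: field_simps)
  show ?thesis unfolding gint_def h1 h2 using gen[OF D0] by simp
qed

lemma pascal: "gbinom q e n R = q powi (-R) * gbinom q e (n-1) R + (e*q) powi (n-R) * gbinom q e (n-1) (R-1)"
proof (cases "R < 0")
  case True thus ?thesis by (simp add: gbinom_def)
next
  case False
  then obtain r where R: "R = int r" by (metis nonneg_int_cases not_less)
  show ?thesis
  proof (cases r)
    case 0 thus ?thesis using R by (simp add: gbinom_def gfact_def)
  next
    case (Suc j)
    define N where "N = (\<Prod>i<j. gint q e (n - 1 - int i))"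
    define F where "F = gfact q e j"
    define g where "g = gint q e (int (Suc j))"
    have F0: "F \<noteq> 0" unfolding F_def by (rule gfact_nz)
    have g0: "g \<noteq> 0" unfolding g_def by (rule gint_nz) simp
    have a1: "(\<Prod>i<Suc j. gint q e (n - int i)) = gint q e n * N"
      unfolding N_def prod.lessThan_Suc_shift by (simp add: algebra_simps)
    have a2: "(\<Prod>i<Suc j. gint q e (n - 1 - int i)) = N * gint q e (n - int (Suc j))"
      unfolding N_def prod.lessThan_Suc by (simp add: algebra_simps)
    have a3: "gint q e n = (e*q) powi (n - int (Suc j)) * g + q powi (- int (Suc j)) * gint q e (n - int (Suc j))"
      using gint_add[of "n - int (Suc j)" "int (Suc j)"] unfolding g_def by simp
    have b1: "gbinom q e n R = gint q e n * N / (F * g)"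
      using R Suc a1 by (simp add: gbinom_def gfact_Suc F_def g_def del: of_nat_Suc)
    have b2: "gbinom q e (n-1) R = N * gint q e (n - int (Suc j)) / (F * g)"
      using R Suc a2 by (simp add: gbinom_def gfact_Suc F_def g_def del: of_nat_Suc)
    have b3: "gbinom q e (n-1) (R-1) = N / F"
      using R Suc by (simp add: gbinom_def F_def N_def)
    show ?thesis unfolding b1 b2 b3 a3 using F0 g0 R Suc
      by (simp add: field_simps del: of_nat_Suc)
  qed
qed

definition mo :: "int \<Rightarrow> int \<Rightarrow> 'a" where "mo a b = e powi a * q powi b"

lemma mo_mult: "mo a b * mo c d = mo (a+c) (b+d)"
  unfolding mo_def using e0 q0 by (simp add: power_int_add algebra_simps)

lemma mo_cong: "a - a' = 2*c \<Longrightarrow> b = b' \<Longrightarrow> mo a b = mo a' b'"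
proof -
  assume h: "a - a' = 2*c" "b = b'"
  have "a = a' + 2*c" using h by simp
  hence "e powi a = e powi a' * (e powi 2) powi c" using e0
    by (simp add: power_int_add power_int_mult)
  also have "e powi 2 = 1" using e2 by (simp add: power2_eq_square)
  finally show ?thesis using h by (simp add: mo_def)
qed

lemma mo_q: "q powi b = mo 0 b" by (simp add: mo_def)
lemma mo_p: "(e*q) powi a = mo a a" by (simp add: mo_def power_int_mult_distrib)
lemma mo_t: "(e * q powi j) powi x = mo x (j*x)"
  by (simp add: mo_def power_int_mult_distrib power_int_mult[symmetric] mult.commute)

abbreviation bin where "bin \<equiv> gbinom q e"

lemma bin_0: "bin n 0 = 1" by (simp add: gbinom_def gfact_def)

lemma bin_over: "x \<ge> 0 \<Longrightarrow> bin x (x+1) = 0"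
proof -
  assume x: "x \<ge> 0"
  have "(\<Prod>i<nat (x+1). gint q e (x - int i)) = 0"
    by (rule prod_zero) (use x gint_0 in \<open>auto intro!: bexI[of _ "nat x"]\<close>)
  thus ?thesis using x by (simp add: gbinom_def)
qed

lemma prod_rev: "(\<Prod>i<N. gint q e (int N - int i)) = gfact q e N"
proof (induct N)
  case 0 thus ?case by (simp add: gfact_def)
next
  case (Suc N)
  have "(\<Prod>i<Suc N. gint q e (int (Suc N) - int i)) = gint q e (int (Suc N)) * (\<Prod>i<N. gint q e (int N - int i))"
    unfolding prod.lessThan_Suc_shift by simp
  thus ?case using Suc by (simp add: gfact_Suc del: of_nat_Suc)
qed

lemma bin_diag: "x \<ge> 0 \<Longrightarrow> bin x x = 1"
proof -
  assume x: "x \<ge> 0"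
  then obtain N where N: "x = int N" by (metis nonneg_int_cases)
  show ?thesis using prod_rev[of N] gfact_nz[of N] N by (simp add: gbinom_def)
qed

definition tA :: "int \<Rightarrow> int \<Rightarrow> nat \<Rightarrow> nat \<Rightarrow> 'a" where
  "tA m k r s = mo (m*(int r - int s)) (2*m*(int r - int s) + (m-k)*(k+int s) + (k-1)*int s)
     * bin (m+int s) (k+int s) * bin (k-1+int s) (int s)"
definition tB :: "int \<Rightarrow> int \<Rightarrow> nat \<Rightarrow> nat \<Rightarrow> 'a" where
  "tB m k r s = mo (k + m*(int r - int s - 1)) (2*(k + m*(int r - int s - 1)) + (m-k-1)*(k+int s+1) + k*int s)
     * bin (m+int s) (k+int s+1) * bin (k+int s) (int s)"
definition tE :: "int \<Rightarrow> int \<Rightarrow> nat \<Rightarrow> nat \<Rightarrow> 'a" where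
  "tE m k r j = mo (m*(int r - int j)) (2*m*(int r - int j) + (m-k)*(k+int j) + k*int j)
     * bin (m+int j) (k+int j) * bin (k+int j) (int j)"

lemma tele_step: "tE m k r (Suc j) = tE m k r j + tA m k r (Suc j) + tB m k r j"
proof -
  have isuc: "int (Suc j) = int j + 1" by simp
  define X where "X = bin (m+(int j+1)) (k+(int j+1))"
  define X1 where "X1 = bin (m+int j) (k+int j+1)"
  define X2 where "X2 = bin (m+int j) (k+int j)"
  define Y1 where "Y1 = bin (k+int j) (int j+1)"
  define Y2 where "Y2 = bin (k+int j) (int j)"
  define a' where "a' = m*(int r - (int j+1))"
  define b' where "b' = 2*m*(int r - (int j+1)) + (m-k)*(k+(int j+1)) + k*(int j+1)"
  define aA where "aA = m*(int r - (int j+1))"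
  define bA where "bA = 2*m*(int r - (int j+1)) + (m-k)*(k+(int j+1)) + (k-1)*(int j+1)"
  define aB where "aB = k + m*(int r - int j - 1)"
  define bB where "bB = 2*(k + m*(int r - int j - 1)) + (m-k-1)*(k+int j+1) + k*int j"
  define aE where "aE = m*(int r - int j)"
  define bE where "bE = 2*m*(int r - int j) + (m-k)*(k+int j) + k*int j"
  have P1: "bin (k+(int j+1)) (int j+1) = q powi (-(int j+1)) * Y1 + (e*q) powi k * Y2"
    using pascal[of "k+(int j+1)" "int j+1"] unfolding Y1_def Y2_def by simp
  have P2: "X = q powi (-(k+(int j+1))) * X1 + (e*q) powi (m-k) * X2"
    using pascal[of "m+(int j+1)" "k+(int j+1)"] unfolding X_def X1_def X2_def
    by (simp add: add.assoc)
  have E1: "tE m k r (Suc j) = mo a' b' * X * bin (k+(int j+1)) (int j+1)"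
    unfolding tE_def isuc a'_def b'_def X_def ..
  have A1: "tA m k r (Suc j) = mo aA bA * X * Y1"
  proof -
    have "k - 1 + (int j + 1) = k + int j" by simp
    thus ?thesis unfolding tA_def isuc aA_def bA_def X_def Y1_def by simp
  qed
  have B1: "tB m k r j = mo aB bB * X1 * Y2" unfolding tB_def aB_def bB_def X1_def Y2_def ..
  have E0: "tE m k r j = mo aE bE * X2 * Y2" unfolding tE_def aE_def bE_def X2_def Y2_def ..
  have c1: "mo a' b' * q powi (-(int j+1)) = mo aA bA"
    unfolding mo_q mo_mult by (rule mo_cong[where c=0]) (simp_all add: a'_def b'_def aA_def bA_def algebra_simps)
  have c2: "mo a' b' * (e*q) powi k * q powi (-(k+(int j+1))) = mo aB bB"
    unfolding mo_q mo_p mo_mult by (rule mo_cong[where c=0]) (simp_all add: a'_def b'_def aB_def bB_def algebra_simps)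
  have c3: "mo a' b' * (e*q) powi k * (e*q) powi (m-k) = mo aE bE"
    unfolding mo_q mo_p mo_mult by (rule mo_cong[where c=0]) (simp_all add: a'_def b'_def aE_def bE_def algebra_simps)
  show ?thesis unfolding E1 A1 B1 E0 P1 P2 c1[symmetric] c2[symmetric] c3[symmetric]
    by (simp add: algebra_simps)
qed

lemma tele: "(\<Sum>s\<le>j. tA m k r s) + (\<Sum>s<j. tB m k r s) = tE m k r j"
proof (induct j)
  case 0 thus ?case by (simp add: tA_def tE_def bin_0)
next
  case (Suc j)
  show ?case using Suc by (simp add: tele_step algebra_simps del: of_nat_Suc)
qed

lemma gb_r: "gb q e m n r = (e * q powi (-2)) powi (hsh (n - int r) r) * (\<Sum>s<r. tB m (n - int r) r s)"
proof -
  have "(e * q powi 2) powi (n - int r + m * (int r - int s - 1))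
        * q powi ((m - n + int r - 1) * (n - int r + int s + 1) + (n - int r) * int s)
      = mo (n - int r + m*(int r - int s - 1)) (2*(n - int r + m*(int r - int s - 1)) + (m-(n - int r)-1)*(n - int r+int s+1) + (n - int r)*int s)" for s
    unfolding mo_t unfolding mo_q mo_mult
    by (rule mo_cong[where c=0]) (simp_all add: algebra_simps)
  thus ?thesis unfolding gb_def tB_def by simp
qed

lemma gb_Suc: "gb q e m n (Suc r) = (e * q powi (-2)) powi (hsh (n - int r) r) * (\<Sum>s\<le>r. tA m (n - int r) r s)"
proof -
  have i1: "n - int (Suc r) + int s + 1 = n - int r + int s" for s by simp
  have i2: "n - int (Suc r) + int s = n - int r - 1 + int s" for s by simp
  have h: "(e * q powi (-2)) powi (hsh (n - int (Suc r)) (Suc r)) * (e * q powi 2) powi (n - int (Suc r) + m * (int (Suc r) - int s - 1))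
        * q powi ((m - n + int (Suc r) - 1) * (n - int (Suc r) + int s + 1) + (n - int (Suc r)) * int s)
      = (e * q powi (-2)) powi (hsh (n - int r) r) * mo (m*(int r - int s)) (2*m*(int r - int s) + (m-(n - int r))*((n - int r)+int s) + ((n - int r)-1)*int s)" for s
    unfolding mo_t unfolding mo_q mo_mult hsh_Suc
    by (rule mo_cong[where c="n - int r - 1"]) (simp_all add: algebra_simps)
  have h2: "(e * q powi (-2)) powi (hsh (n - int (Suc r)) (Suc r)) * ((e * q powi 2) powi (n - int (Suc r) + m * (int (Suc r) - int s - 1))
        * q powi ((m - n + int (Suc r) - 1) * (n - int (Suc r) + int s + 1) + (n - int (Suc r)) * int s)
        * gbinom q e (m + int s) (n - int (Suc r) + int s + 1)
        * gbinom q e (n - int (Suc r) + int s) (int s))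
      = (e * q powi (-2)) powi (hsh (n - int r) r) * tA m (n - int r) r s" for s
  proof -
    have "(e * q powi (-2)) powi (hsh (n - int (Suc r)) (Suc r)) * ((e * q powi 2) powi (n - int (Suc r) + m * (int (Suc r) - int s - 1))
        * q powi ((m - n + int (Suc r) - 1) * (n - int (Suc r) + int s + 1) + (n - int (Suc r)) * int s)
        * gbinom q e (m + int s) (n - int (Suc r) + int s + 1)
        * gbinom q e (n - int (Suc r) + int s) (int s))
      = (e * q powi (-2)) powi (hsh (n - int (Suc r)) (Suc r)) * (e * q powi 2) powi (n - int (Suc r) + m * (int (Suc r) - int s - 1))
        * q powi ((m - n + int (Suc r) - 1) * (n - int (Suc r) + int s + 1) + (n - int (Suc r)) * int s)
        * gbinom q e (m + int s) (n - int r + int s)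
        * gbinom q e (n - int r - 1 + int s) (int s)"
      unfolding i1 unfolding i2 by (simp only: mult.assoc)
    also have "\<dots> = (e * q powi (-2)) powi (hsh (n - int r) r) * tA m (n - int r) r s"
      unfolding h tA_def by (simp only: mult.assoc)
    finally show ?thesis .
  qed
  show ?thesis unfolding gb_def sum_distrib_left lessThan_Suc_atMost[symmetric]
    by (rule sum.cong[OF refl], rule h2)
qed

lemma gc_r: "gc q e m n r = (e * q powi (-2)) powi (hsh (n - int r) r) * tE m (n - int r) r r"
proof -
  have i: "n - int r + int r = n" by simp
  have "q powi ((m - n + int r) * n + (n - int r) * int r) = mo (m*(int r - int r)) (2*m*(int r - int r) + (m-(n - int r))*((n - int r)+int r) + (n - int r)*int r)"
    unfolding mo_q by (rule mo_cong[where c=0]) (simp_all add: algebra_simps)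
  thus ?thesis unfolding gc_def tE_def i by (simp add: mult.assoc)
qed

lemma gmain: "gc q e m n r = gb q e m n r + gb q e m n (Suc r)"
  unfolding gb_Suc unfolding gc_r gb_r tele[of m "n - int r" r r, symmetric] by (simp add: algebra_simps)

lemma gsecond:
  assumes rn: "int r \<le> n"
  shows "q powi ((n - int r) * int r) * bin n (int r)
    = (\<Sum>s\<le>r. (e * q powi 2) powi ((n - int r) * (int r - int s))
              * q powi ((n - int r - 1) * int s) * bin (n - int r + int s - 1) (int s))"
proof -
  have B0: "tB (n - int r) (n - int r) r s = 0" for s
    unfolding tB_def using bin_over[of "n - int r + int s"] rn by simp
  have E: "tE (n - int r) (n - int r) r r = q powi ((n - int r) * int r) * bin n (int r)"
  proof -
    have i: "n - int r + int r = n" by simp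
    have "mo ((n - int r)*(int r - int r)) (2*(n - int r)*(int r - int r) + ((n - int r)-(n - int r))*((n - int r)+int r) + (n - int r)*int r)
       = q powi ((n - int r) * int r)"
      unfolding mo_q by (rule mo_cong[where c=0]) (simp_all add: algebra_simps)
    thus ?thesis unfolding tE_def i using bin_diag[of n] rn by simp
  qed
  have A: "tA (n - int r) (n - int r) r s = (e * q powi 2) powi ((n - int r) * (int r - int s))
              * q powi ((n - int r - 1) * int s) * bin (n - int r + int s - 1) (int s)" for s
  proof -
    have i: "n - int r - 1 + int s = n - int r + int s - 1" by simp
    have "(e * q powi 2) powi ((n - int r) * (int r - int s)) * q powi ((n - int r - 1) * int s)
       = mo ((n - int r)*(int r - int s)) (2*(n - int r)*(int r - int s) + ((n - int r)-(n - int r))*((n - int r)+int s) + ((n - int r)-1)*int s)"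
      unfolding mo_t unfolding mo_q mo_mult by (rule mo_cong[where c=0]) (simp_all add: algebra_simps)
    thus ?thesis unfolding tA_def i using bin_diag[of "n - int r + int s"] rn by simp
  qed
  show ?thesis using tele[of "n - int r" "n - int r" r r] unfolding B0 E A by simp
qed

end

definition hm :: "Qq \<Rightarrow> qpi \<Rightarrow> Qq" where "hm e x = re x + e * im x"
definition unitq :: "qpi \<Rightarrow> bool" where "unitq x \<longleftrightarrow> re x ^ 2 - im x ^ 2 \<noteq> 0"

lemma hm_add[simp]: "hm e (x + y) = hm e x + hm e y"
  by (simp add: hm_def plus_qpi_def algebra_simps)
lemma hm_diff[simp]: "hm e (x - y) = hm e x - hm e y"
  by (simp add: hm_def minus_qpi_def algebra_simps)
lemma hm_0[simp]: "hm e 0 = 0" by (simp add: hm_def zero_qpi_def)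
lemma hm_1[simp]: "hm e 1 = 1" by (simp add: hm_def one_qpi_def)
lemma hm_mult[simp]: "e*e = 1 \<Longrightarrow> hm e (x * y) = hm e x * hm e y"
proof -
  assume e: "e*e = 1"
  have "hm e x * hm e y = re x * re y + (e*e) * (im x * im y) + e * (re x * im y + im x * re y)"
    by (simp add: hm_def algebra_simps)
  thus ?thesis using e by (simp add: hm_def times_qpi_def)
qed
lemma hm_PI[simp]: "hm e PI = e" by (simp add: hm_def PI_def)
lemma hm_Q[simp]: "hm e Q = qvar" by (simp add: hm_def Q_def qpi_of_def)

lemma hm_power: "e*e = 1 \<Longrightarrow> hm e (x ^ n) = hm e x ^ n"
  by (induct n) simp_all

lemma hm_sum: "hm e (sum f A) = (\<Sum>a\<in>A. hm e (f a))"
  by (induct A rule: infinite_finite_induct) simp_all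

lemma hm_prod: "e*e = 1 \<Longrightarrow> hm e (prod f A) = (\<Prod>a\<in>A. hm e (f a))"
  by (induct A rule: infinite_finite_induct) simp_all

lemma unitq_iff: "unitq x \<longleftrightarrow> hm 1 x \<noteq> 0 \<and> hm (-1) x \<noteq> 0"
proof -
  have "re x ^ 2 - im x ^ 2 = hm 1 x * hm (-1) x" by (simp add: hm_def power2_eq_square algebra_simps)
  thus ?thesis by (simp add: unitq_def)
qed

lemma hm_inverse: "e*e = 1 \<Longrightarrow> unitq x \<Longrightarrow> hm e (inverse x) = inverse (hm e x)"
proof -
  assume e: "e*e = 1" and u: "unitq x"
  have f: "re x ^ 2 - im x ^ 2 = (re x + e * im x) * (re x - e * im x)"
    using e by (simp add: power2_eq_square algebra_simps)
  hence nz: "re x + e * im x \<noteq> 0" "re x - e * im x \<noteq> 0" using u by (auto simp: unitq_def)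
  have "hm e (inverse x) = (re x - e * im x) / (re x ^ 2 - im x ^ 2)"
    by (simp add: hm_def inverse_qpi_def diff_divide_distrib)
  also have "\<dots> = inverse (hm e x)" unfolding f using nz by (simp add: hm_def inverse_eq_divide)
  finally show ?thesis .
qed

lemma hm_powi: "e*e = 1 \<Longrightarrow> unitq x \<Longrightarrow> hm e (x powi n) = hm e x powi n"
  by (simp add: power_int_def hm_power hm_inverse)

lemma hm_divide: "e*e = 1 \<Longrightarrow> unitq y \<Longrightarrow> hm e (x / y) = hm e x / hm e y"
  by (simp add: divide_qpi_def hm_inverse divide_inverse)

lemma unitq_mult: "unitq x \<Longrightarrow> unitq y \<Longrightarrow> unitq (x*y)"
  by (simp add: unitq_iff)

lemma unitq_powi: "unitq x \<Longrightarrow> unitq (x powi n)"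
  by (simp add: unitq_iff hm_powi)

lemma unitq_PI: "unitq PI" by (simp add: unitq_iff)

lemma qvar_pow: "qvar ^ k = Fract ([:0,1:] ^ k) 1"
  by (induct k) (simp_all add: qvar_def One_fract_def)

lemma qvar0: "qvar \<noteq> 0"
  by (simp add: qvar_def Zero_fract_def eq_fract)

lemma unitq_Q: "unitq Q" by (simp add: unitq_iff qvar0)

lemma qvar_pow_ne: assumes "k > 0" shows "qvar ^ k \<noteq> 1" "qvar ^ k \<noteq> -1"
proof -
  have d: "degree ([:0,1::rat:] ^ k) = k" by (simp add: degree_power_eq)
  have "[:0,1::rat:] ^ k \<noteq> 1" using d assms by (metis degree_1 less_numeral_extra(3))
  thus "qvar ^ k \<noteq> 1" by (simp add: qvar_pow One_fract_def eq_fract)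
  have "[:0,1::rat:] ^ k \<noteq> -1" using d assms
    by (metis degree_minus degree_1 less_numeral_extra(3))
  thus "qvar ^ k \<noteq> -1" by (simp add: qvar_pow One_fract_def eq_fract)
qed

lemma gsetup_qvar: assumes e: "e = 1 \<or> e = -1" shows "gsetup qvar e"
proof
  show "e*e = 1" using e by auto
  show "qvar \<noteq> 0" by (rule qvar0)
  fix i :: nat assume i: "i > 0"
  have pos: "2*i > 0" using i by simp
  have "(e*qvar)^i * qvar^i = e^i * qvar^(2*i)" by (simp add: power_mult_distrib power_add mult_2)
  moreover have "e^i = 1 \<or> e^i = -1" using e by (cases "even i") (auto simp: neg_one_even_power neg_one_odd_power)
  ultimately show "(e*qvar)^i * qvar^i \<noteq> 1" using qvar_pow_ne[OF pos] by auto
qed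


lemma unitq_power: "unitq x \<Longrightarrow> unitq (x ^ k)"
  by (simp add: unitq_iff hm_power)
lemma unitq_inverse: "unitq x \<Longrightarrow> unitq (inverse x)"
  by (simp add: unitq_iff hm_inverse)

lemma ee: "e = 1 \<or> e = -1 \<Longrightarrow> e * e = (1::Qq)" by auto

lemmas hm_simps = hm_mult hm_powi hm_inverse hm_divide hm_power hm_sum hm_prod
  unitq_mult unitq_powi unitq_PI unitq_Q unitq_power unitq_inverse

lemma unitq_D: "unitq (PI*Q - Q powi (-1))"
proof -
  have "hm e (PI*Q - Q powi (-1)) = e * qvar - qvar powi (-1)" if "e = 1 \<or> e = -1" for e
    using ee[OF that] by (simp add: hm_simps)
  moreover have "e * qvar - qvar powi (-1) \<noteq> 0" if "e = 1 \<or> e = -1" for e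
    using gsetup.D0[OF gsetup_qvar[OF that]] .
  ultimately show ?thesis unfolding unitq_iff by (metis)
qed

lemma hm_qint: "e = 1 \<or> e = -1 \<Longrightarrow> hm e (qint n) = gint qvar e n"
  using unitq_D ee[of e] by (simp add: qint_def gint_def hm_simps)

lemma hm_qfact: "e = 1 \<or> e = -1 \<Longrightarrow> hm e (qfact r) = gfact qvar e r"
  using ee[of e] by (simp add: qfact_def gfact_def hm_simps hm_qint)

lemma unitq_qfact: "unitq (qfact r)"
  unfolding unitq_iff hm_qfact[of 1, simplified] hm_qfact[of "-1", simplified]
  using gsetup.gfact_nz[OF gsetup_qvar[of 1]] gsetup.gfact_nz[OF gsetup_qvar[of "-1"]] by simp

lemma hm_qbinom: "e = 1 \<or> e = -1 \<Longrightarrow> hm e (qbinom n k) = gbinom qvar e n k"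
  using ee[of e] unitq_qfact by (simp add: qbinom_def gbinom_def hm_simps hm_qint hm_qfact)

lemma hm_bmn: "e = 1 \<or> e = -1 \<Longrightarrow> hm e (bmn m n r) = gb qvar e m n r"
  using ee[of e] by (simp add: bmn_def gb_def hm_simps hm_qbinom)

lemma hm_cmn: "e = 1 \<or> e = -1 \<Longrightarrow> hm e (cmn m n r) = gc qvar e m n r"
  using ee[of e] by (simp add: cmn_def gc_def hm_simps hm_qbinom)

lemma two_Qq: "(2::Qq) \<noteq> 0"
proof -
  have "(2::Qq) = Fract 2 1" using of_nat_fract[of 2] by simp
  moreover have "Fract (2::rat poly) 1 \<noteq> Fract 0 1" by (simp add: eq_fract)
  ultimately show ?thesis by (simp add: Zero_fract_def)
qed

lemma hm_inj: assumes a: "hm 1 x = hm 1 y" and b: "hm (-1) x = hm (-1) y" shows "x = y"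
proof -
  have a': "re x + im x = re y + im y" and b': "re x - im x = re y - im y" using a b by (simp_all add: hm_def)
  have "2 * re x = (re x + im x) + (re x - im x)" by simp
  also have "\<dots> = 2 * re y" unfolding a' b' by simp
  finally have r: "re x = re y" using two_Qq by simp
  with a' have "im x = im y" by simp
  with r show ?thesis by (simp add: qpi.expand)
qed

theorem mainTheorem3:
  shows "(\<forall>(m::int) (n::int) (r::nat). cmn m n r = bmn m n r + bmn m n (Suc r))
    \<and> (\<forall>(n::int) (r::nat). int r \<le> n \<longrightarrow>
         Q powi ((n - int r) * int r) * qbinom n (int r)
         = (\<Sum>s\<le>r. (PI * Q powi 2) powi ((n - int r) * (int r - int s))
              * Q powi ((n - int r - 1) * int s)
              * qbinom (n - int r + int s - 1) (int s)))"
proof (intro conjI allI impI)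
  fix m n :: int and r :: nat
  have H: "hm e (cmn m n r) = hm e (bmn m n r + bmn m n (Suc r))" if "e = 1 \<or> e = -1" for e
    using gsetup.gmain[OF gsetup_qvar[OF that]] by (simp add: hm_cmn hm_bmn that)
  show "cmn m n r = bmn m n r + bmn m n (Suc r)" by (rule hm_inj[OF H H]) simp_all
next
  fix n :: int and r :: nat assume rn: "int r \<le> n"
  have H: "hm e (Q powi ((n - int r) * int r) * qbinom n (int r))
       = hm e (\<Sum>s\<le>r. (PI * Q powi 2) powi ((n - int r) * (int r - int s))
              * Q powi ((n - int r - 1) * int s)
              * qbinom (n - int r + int s - 1) (int s))" (is "hm e ?L = hm e ?R") if "e = 1 \<or> e = -1" for e
    using gsetup.gsecond[OF gsetup_qvar[OF that] rn] ee[OF that]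
    by (simp add: hm_simps hm_qbinom that)
  show "Q powi ((n - int r) * int r) * qbinom n (int r)
         = (\<Sum>s\<le>r. (PI * Q powi 2) powi ((n - int r) * (int r - int s))
              * Q powi ((n - int r - 1) * int s)
              * qbinom (n - int r + int s - 1) (int s))" by (rule hm_inj[OF H H]) simp_all
qed

end
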